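(* Let $H$ be a cocommutative pointed Majid algebra over a field $k$ whose quiver $Q$ is connected (equivalently, $H$ is link-indecomposable). Then $Q$ has exactly one vertex (so $Q$ is a multi-loop quiver, all arrows being loops at that vertex) and hence $H$ is connected, i.e. its coradical is $k1_H$.
   Context: A Majid algebra (dual quasi-Hopf algebra) over $k$ is a coalgebra $(H,\Delta,\varepsilon)$ together with coalgebra maps $\mathrm{M}:H\otimes H\to H$ and $\mu:k\to H$, a convolution-invertible reassociator $\Phi:H^{\otimes3}\to k$, a coalgebra antimorphism $\mathcal S$ and functionals $\alpha,\beta$ satisfying the dual quasi-Hopf axioms: $a_1(b_1c_1)\Phi(a_2,b_2,c_2)=\Phi(a_1,b_1,c_1)(a_2b_2)c_2$; $1_Ha=a=a1_H$; $\Phi(a_1,b_1,c_1d_1)\Phi(a_2b_2,c_2,d_2)=\Phi(b_1,c_1,d_1)\Phi(a_1,b_2c_2,d_2)\Phi(a_2,b_3,c_3)$; $\Phi(a,1_H,b)=\varepsilon(a)\varepsilon(b)$; $\mathcal S(a_1)\alpha(a_2)a_3=\alpha(a)1_H$, $a_1\beta(a_2)\mathcal S(a_3)=\beta(a)1_H$; $\Phi(a_1,\mathcal S(a_3),a_5)\beta(a_2)\alpha(a_4)=\Phi^{-1}(\mathcal S(a_1),a_3,\mathcal S(a_5))\alpha(a_2)\beta(a_4)=\varepsilon(a)$. $H$ is pointed if all simple subcoalgebras are one-dimensional, and cocommutative if $\Delta=\Delta^{op}$. The quiver of a pointed coalgebra $C$ has vertex set the group-likes $G(C)$ and $\dim_k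 P_{g,h}(C)/k(g-h)$ arrows from $h$ to $g$, where $P_{g,h}(C)=\{x\in C:\Delta(x)=g\otimes x+x\otimes h\}$. *)

theory Defs
  imports Main
begin

text \<open>Vector spaces are presented by a basis: a vector of H over the field 'k with basis
  indexed by 'b is a finitely supported function 'b \<Rightarrow> 'k; H \<otimes> H has basis 'b \<times> 'b.
  Linear maps are given by their values on basis elements and extended linearly.\<close>

definition supp :: "('a \<Rightarrow> 'k::zero) \<Rightarrow> 'a set" where
  "supp f = {x. f x \<noteq> 0}"

definition fvec :: "('a \<Rightarrow> 'k::zero) set" where
  "fvec = {f. finite (supp f)}"

definition zvec :: "'a \<Rightarrow> 'k::zero" where
  "zvec = (\<lambda>_. 0)"

definition bas :: "'a \<Rightarrow> 'a \<Rightarrow> 'k::{zero,one}" where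
  "bas a = (\<lambda>i. if i = a then 1 else 0)"

definition lin :: "('a \<Rightarrow> 'c \<Rightarrow> 'k::comm_semiring_1) \<Rightarrow> ('a \<Rightarrow> 'k) \<Rightarrow> 'c \<Rightarrow> 'k" where
  "lin L x = (\<lambda>c. \<Sum>i\<in>supp x. x i * L i c)"

definition ev :: "('a \<Rightarrow> 'k::comm_semiring_1) \<Rightarrow> ('a \<Rightarrow> 'k) \<Rightarrow> 'k" where
  "ev f x = (\<Sum>i\<in>supp x. x i * f i)"

definition tens :: "('a \<Rightarrow> 'k::times) \<Rightarrow> ('c \<Rightarrow> 'k) \<Rightarrow> ('a \<times> 'c) \<Rightarrow> 'k" where
  "tens x y = (\<lambda>(i,j). x i * y j)"

text \<open>Sweedler sums for a basis element a: sum over a_1 \<otimes> a_2 = \<Delta>(a)\<close>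
definition sw :: "('b \<Rightarrow> 'b \<times> 'b \<Rightarrow> 'k::comm_semiring_1) \<Rightarrow> 'b \<Rightarrow> ('b \<Rightarrow> 'b \<Rightarrow> 'k) \<Rightarrow> 'k" where
  "sw D a f = (\<Sum>p\<in>supp (D a). D a p * f (fst p) (snd p))"

definition sw3 :: "('b \<Rightarrow> 'b \<times> 'b \<Rightarrow> 'k::comm_semiring_1) \<Rightarrow> 'b \<Rightarrow> ('b \<Rightarrow> 'b \<Rightarrow> 'b \<Rightarrow> 'k) \<Rightarrow> 'k" where
  "sw3 D a f = sw D a (\<lambda>x y. sw D y (\<lambda>y1 y2. f x y1 y2))"

definition sw5 :: "('b \<Rightarrow> 'b \<times> 'b \<Rightarrow> 'k::comm_semiring_1) \<Rightarrow> 'b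
     \<Rightarrow> ('b \<Rightarrow> 'b \<Rightarrow> 'b \<Rightarrow> 'b \<Rightarrow> 'b \<Rightarrow> 'k) \<Rightarrow> 'k" where
  "sw5 D a f = sw D a (\<lambda>x1 y. sw3 D y (\<lambda>x2 x3 z. sw D z (\<lambda>x4 x5. f x1 x2 x3 x4 x5)))"

text \<open>multiplication H \<otimes> H \<rightarrow> H given on basis pairs, extended bilinearly\<close>
definition mul :: "('b \<Rightarrow> 'b \<Rightarrow> 'b \<Rightarrow> 'k::comm_semiring_1) \<Rightarrow> ('b \<Rightarrow> 'k) \<Rightarrow> ('b \<Rightarrow> 'k) \<Rightarrow> 'b \<Rightarrow> 'k" where
  "mul M x y = lin (\<lambda>p. M (fst p) (snd p)) (tens x y)"

definition phv :: "('b \<Rightarrow> 'b \<Rightarrow> 'b \<Rightarrow> 'k::comm_semiring_1) \<Rightarrow> ('b \<Rightarrow> 'k) \<Rightarrow> ('b \<Rightarrow> 'k) \<Rightarrow> ('b \<Rightarrow> 'k) \<Rightarrow> 'k" where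
  "phv P x y z = (\<Sum>i\<in>supp x. \<Sum>j\<in>supp y. \<Sum>l\<in>supp z. x i * y j * z l * P i j l)"

definition coalgebra :: "('b \<Rightarrow> 'b \<times> 'b \<Rightarrow> 'k::field) \<Rightarrow> ('b \<Rightarrow> 'k) \<Rightarrow> bool" where
  "coalgebra D eps \<longleftrightarrow>
     (\<forall>a. finite (supp (D a))) \<and>
     (\<forall>a p q r. sw D a (\<lambda>x y. D x (p,q) * bas y r) = sw D a (\<lambda>x y. bas x p * D y (q,r))) \<and>
     (\<forall>a c. sw D a (\<lambda>x y. eps x * bas y c) = bas a c) \<and>
     (\<forall>a c. sw D a (\<lambda>x y. bas x c * eps y) = bas a c)"

definition cocommutative :: "('b \<Rightarrow> 'b \<times> 'b \<Rightarrow> 'k::field) \<Rightarrow> bool" where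
  "cocommutative D \<longleftrightarrow> (\<forall>a x y. D a (x,y) = D a (y,x))"

text \<open>Majid algebra (dual quasi-Hopf algebra): coalgebra (D, eps), multiplication M,
  unit u = \<mu>(1), reassociator Phi, antipode S, functionals alpha, beta.\<close>
definition majid :: "('b \<Rightarrow> 'b \<times> 'b \<Rightarrow> 'k::field) \<Rightarrow> ('b \<Rightarrow> 'k) \<Rightarrow> ('b \<Rightarrow> 'b \<Rightarrow> 'b \<Rightarrow> 'k)
    \<Rightarrow> ('b \<Rightarrow> 'k) \<Rightarrow> ('b \<Rightarrow> 'b \<Rightarrow> 'b \<Rightarrow> 'k) \<Rightarrow> ('b \<Rightarrow> 'b \<Rightarrow> 'k) \<Rightarrow> ('b \<Rightarrow> 'k) \<Rightarrow> ('b \<Rightarrow> 'k) \<Rightarrow> bool" where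
  "majid D eps M u Phi S alpha beta \<longleftrightarrow>
     coalgebra D eps \<and>
     (\<forall>i j. M i j \<in> fvec) \<and> u \<in> fvec \<and> (\<forall>a. S a \<in> fvec) \<and>
     \<comment> \<open>M is a coalgebra map\<close>
     (\<forall>i j p q. lin D (M i j) (p,q) = sw D i (\<lambda>i1 i2. sw D j (\<lambda>j1 j2. M i1 j1 p * M i2 j2 q))) \<and>
     (\<forall>i j. ev eps (M i j) = eps i * eps j) \<and>
     \<comment> \<open>\<mu> is a coalgebra map\<close>
     lin D u = tens u u \<and> ev eps u = 1 \<and>
     \<comment> \<open>quasi-associativity\<close>
     (\<forall>a b c t.
        sw D a (\<lambda>a1 a2. sw D b (\<lambda>b1 b2. sw D c (\<lambda>c1 c2.
           mul M (bas a1) (mul M (bas b1) (bas c1)) t * Phi a2 b2 c2)))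
      = sw D a (\<lambda>a1 a2. sw D b (\<lambda>b1 b2. sw D c (\<lambda>c1 c2.
           Phi a1 b1 c1 * mul M (mul M (bas a2) (bas b2)) (bas c2) t)))) \<and>
     \<comment> \<open>unit\<close>
     (\<forall>a. mul M u (bas a) = bas a \<and> mul M (bas a) u = bas a) \<and>
     \<comment> \<open>3-cocycle (pentagon)\<close>
     (\<forall>a b c d.
        sw D a (\<lambda>a1 a2. sw D b (\<lambda>b1 b2. sw D c (\<lambda>c1 c2. sw D d (\<lambda>d1 d2.
           phv Phi (bas a1) (bas b1) (mul M (bas c1) (bas d1))
             * phv Phi (mul M (bas a2) (bas b2)) (bas c2) (bas d2)))))
      = sw D a (\<lambda>a1 a2. sw3 D b (\<lambda>b1 b2 b3. sw3 D c (\<lambda>c1 c2 c3. sw D d (\<lambda>d1 d2.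
           Phi b1 c1 d1 * phv Phi (bas a1) (mul M (bas b2) (bas c2)) (bas d2) * Phi a2 b3 c3))))) \<and>
     (\<forall>a b. phv Phi (bas a) u (bas b) = eps a * eps b) \<and>
     \<comment> \<open>S is a coalgebra antimorphism\<close>
     (\<forall>a p q. lin D (S a) (p,q) = sw D a (\<lambda>a1 a2. S a2 p * S a1 q)) \<and>
     (\<forall>a. ev eps (S a) = eps a) \<and>
     (\<forall>a t. sw3 D a (\<lambda>a1 a2 a3. alpha a2 * mul M (S a1) (bas a3) t) = alpha a * u t) \<and>
     (\<forall>a t. sw3 D a (\<lambda>a1 a2 a3. beta a2 * mul M (bas a1) (S a3) t) = beta a * u t) \<and>
     \<comment> \<open>Phi is convolution invertible with inverse Phi', and the antipode axioms\<close>
     (\<exists>Phi'.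
        (\<forall>a b c. sw D a (\<lambda>a1 a2. sw D b (\<lambda>b1 b2. sw D c (\<lambda>c1 c2. Phi a1 b1 c1 * Phi' a2 b2 c2)))
                 = eps a * eps b * eps c) \<and>
        (\<forall>a b c. sw D a (\<lambda>a1 a2. sw D b (\<lambda>b1 b2. sw D c (\<lambda>c1 c2. Phi' a1 b1 c1 * Phi a2 b2 c2)))
                 = eps a * eps b * eps c) \<and>
        (\<forall>a. sw5 D a (\<lambda>a1 a2 a3 a4 a5. phv Phi (bas a1) (S a3) (bas a5) * beta a2 * alpha a4) = eps a) \<and>
        (\<forall>a. sw5 D a (\<lambda>a1 a2 a3 a4 a5. phv Phi' (S a1) (bas a3) (S a5) * alpha a2 * beta a4) = eps a))"

definition subspace :: "('b \<Rightarrow> 'k::field) set \<Rightarrow> bool" where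
  "subspace W \<longleftrightarrow> W \<subseteq> fvec \<and> zvec \<in> W \<and> (\<forall>x\<in>W. \<forall>y\<in>W. (\<lambda>i. x i + y i) \<in> W)
      \<and> (\<forall>c. \<forall>x\<in>W. (\<lambda>i. c * x i) \<in> W)"

text \<open>W \<otimes> W inside H \<otimes> H\<close>
definition tspan :: "('b \<Rightarrow> 'k::field) set \<Rightarrow> ('b \<times> 'b \<Rightarrow> 'k) set" where
  "tspan W = {z. \<exists>(n::nat) xs ys. (\<forall>i<n. xs i \<in> W \<and> ys i \<in> W) \<and>
                    z = (\<lambda>p. \<Sum>i<n. tens (xs i) (ys i) p)}"

definition span :: "('b \<Rightarrow> 'k::field) set \<Rightarrow> ('b \<Rightarrow> 'k) set" where
  "span S = {z. \<exists>(n::nat) cs xs. (\<forall>i<n. xs i \<in> S) \<and> z = (\<lambda>t. \<Sum>i<n. cs i * xs i t)}"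

definition line :: "('b \<Rightarrow> 'k::field) \<Rightarrow> ('b \<Rightarrow> 'k) set" where
  "line x = {(\<lambda>i. c * x i) | c. True}"

definition subcoalg :: "('b \<Rightarrow> 'b \<times> 'b \<Rightarrow> 'k::field) \<Rightarrow> ('b \<Rightarrow> 'k) set \<Rightarrow> bool" where
  "subcoalg D W \<longleftrightarrow> subspace W \<and> (\<forall>x\<in>W. lin D x \<in> tspan W)"

definition simple_subcoalg :: "('b \<Rightarrow> 'b \<times> 'b \<Rightarrow> 'k::field) \<Rightarrow> ('b \<Rightarrow> 'k) set \<Rightarrow> bool" where
  "simple_subcoalg D W \<longleftrightarrow> subcoalg D W \<and> W \<noteq> {zvec} \<and>
      (\<forall>W'. subcoalg D W' \<and> W' \<subseteq> W \<longrightarrow> W' = {zvec} \<or> W' = W)"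

definition pointed :: "('b \<Rightarrow> 'b \<times> 'b \<Rightarrow> 'k::field) \<Rightarrow> bool" where
  "pointed D \<longleftrightarrow> (\<forall>W. simple_subcoalg D W \<longrightarrow> (\<exists>x. x \<noteq> zvec \<and> W = line x))"

definition coradical :: "('b \<Rightarrow> 'b \<times> 'b \<Rightarrow> 'k::field) \<Rightarrow> ('b \<Rightarrow> 'k) set" where
  "coradical D = span (\<Union>{W. simple_subcoalg D W})"

definition grouplike :: "('b \<Rightarrow> 'b \<times> 'b \<Rightarrow> 'k::field) \<Rightarrow> ('b \<Rightarrow> 'k) set" where
  "grouplike D = {g \<in> fvec. g \<noteq> zvec \<and> lin D g = tens g g}"

definition prim :: "('b \<Rightarrow> 'b \<times> 'b \<Rightarrow> 'k::field) \<Rightarrow> ('b \<Rightarrow> 'k) \<Rightarrow> ('b \<Rightarrow> 'k) \<Rightarrow> ('b \<Rightarrow> 'k) set" where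
  "prim D g h = {x \<in> fvec. lin D x = (\<lambda>p. tens g x p + tens x h p)}"

text \<open>There is at least one arrow from h to g in the quiver iff dim P_{g,h}/k(g-h) > 0,
  i.e. iff P_{g,h} is not contained in k(g-h) (note k(g-h) \<subseteq> P_{g,h} always).\<close>
definition arrow :: "('b \<Rightarrow> 'b \<times> 'b \<Rightarrow> 'k::field) \<Rightarrow> ('b \<Rightarrow> 'k) \<Rightarrow> ('b \<Rightarrow> 'k) \<Rightarrow> bool" where
  "arrow D h g \<longleftrightarrow> \<not> (prim D g h \<subseteq> line (\<lambda>i. g i - h i))"

definition quiver_connected :: "('b \<Rightarrow> 'b \<times> 'b \<Rightarrow> 'k::field) \<Rightarrow> bool" where
  "quiver_connected D \<longleftrightarrow>
     (\<forall>g\<in>grouplike D. \<forall>h\<in>grouplike D.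
        (g, h) \<in> {(x, y). x \<in> grouplike D \<and> y \<in> grouplike D \<and> (arrow D x y \<or> arrow D y x)}\<^sup>*)"

end

theory Submission
  imports Defs
begin

lemma lin_scale:
  fixes x :: "'a \<Rightarrow> 'k::field"
  shows "lin L (\<lambda>j. c * x j) = (\<lambda>p. c * lin L x p)"
proof (cases "c = 0")
  case True then show ?thesis by (simp add: lin_def supp_def)
next
  case False
  then have "supp (\<lambda>j. c * x j) = supp x" by (auto simp: supp_def)
  then show ?thesis by (simp add: lin_def sum_distrib_left mult.assoc)
qed

lemma lin_cocomm:
  assumes "cocommutative D"
  shows "lin D x (a,b) = lin D x (b,a)"
  using assms by (simp add: lin_def cocommutative_def)

lemma counit_zero:
  fixes D :: "'b \<Rightarrow> 'b \<times> 'b \<Rightarrow> 'k::field"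
  assumes co: "coalgebra D eps" and xf: "x \<in> fvec" and z: "lin D x = (\<lambda>p. 0)"
  shows "x = zvec"
proof
  fix c
  define A where "A = supp x"
  define P where "P = (\<Union>a\<in>A. supp (D a))"
  have fA: "finite A" using xf by (simp add: A_def fvec_def)
  have fD: "\<And>a. finite (supp (D a))" using co by (simp add: coalgebra_def)
  have fP: "finite P" using fA fD by (simp add: P_def)
  have cu: "\<And>a. sw D a (\<lambda>y z. bas y c * eps z) = bas a c" using co by (simp add: coalgebra_def)
  have "x c = (\<Sum>a\<in>A. x a * bas a c)"
  proof -
    have "(\<Sum>a\<in>A. x a * bas a c) = (\<Sum>a\<in>A. if c = a then x a else 0)"
      by (rule sum.cong) (auto simp: bas_def)
    also have "\<dots> = (if c \<in> A then x c else 0)" using fA by (simp add: sum.delta)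
    also have "\<dots> = x c" by (auto simp: A_def supp_def)
    finally show ?thesis by simp
  qed
  also have "\<dots> = (\<Sum>a\<in>A. x a * (\<Sum>p\<in>P. D a p * (bas (fst p) c * eps (snd p))))"
  proof (rule sum.cong[OF refl])
    fix a assume aA: "a \<in> A"
    have "bas a c = sw D a (\<lambda>y z. bas y c * eps z)" using cu by simp
    also have "\<dots> = (\<Sum>p\<in>P. D a p * (bas (fst p) c * eps (snd p)))"
      unfolding sw_def
      by (rule sum.mono_neutral_left) (use fP aA in \<open>auto simp: P_def supp_def\<close>)
    finally show "x a * bas a c = x a * (\<Sum>p\<in>P. D a p * (bas (fst p) c * eps (snd p)))" by simp
  qed
  also have "\<dots> = (\<Sum>p\<in>P. (\<Sum>a\<in>A. x a * D a p) * (bas (fst p) c * eps (snd p)))"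
    by (simp add: sum_distrib_left sum_distrib_right mult.assoc sum.swap[of _ A])
  also have "\<dots> = 0"
  proof -
    have "\<And>p. (\<Sum>a\<in>A. x a * D a p) = 0" using z unfolding lin_def A_def by metis
    then show ?thesis by simp
  qed
  finally show "x c = zvec c" by (simp add: zvec_def)
qed


lemma minor_exists:
  fixes D :: "'b \<Rightarrow> 'b \<times> 'b \<Rightarrow> 'k::field"
  assumes g: "g \<in> grouplike D" and h: "h \<in> grouplike D" and ne: "g \<noteq> h"
  shows "\<exists>i j. g i * h j - g j * h i \<noteq> 0"
proof (rule ccontr)
  assume "\<not> ?thesis"
  then have m: "\<And>i j. g i * h j = g j * h i" by auto
  from g obtain i where gi: "g i \<noteq> 0" by (auto simp: grouplike_def zvec_def)
  define c where "c = h i / g i"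
  have hc: "h = (\<lambda>j. c * g j)"
  proof
    fix j show "h j = c * g j" using m[of i j] gi by (simp add: c_def field_simps)
  qed
  have c0: "c \<noteq> 0" using h hc by (auto simp: grouplike_def zvec_def fun_eq_iff)
  have "lin D h = (\<lambda>p. c * lin D g p)" using hc lin_scale by metis
  then have "tens h h = (\<lambda>p. c * tens g g p)" using g h by (simp add: grouplike_def)
  then have "tens h h (i,i) = c * tens g g (i,i)" by simp
  then have "c * c * (g i * g i) = c * (g i * g i)" by (simp add: hc tens_def algebra_simps)
  then have "c = 1" using c0 gi by simp
  then have "h = g" using hc by simp
  then show False using ne by simp
qed

lemma prim_line:
  fixes D :: "'b \<Rightarrow> 'b \<times> 'b \<Rightarrow> 'k::field"
  assumes cc: "cocommutative D" and g: "g \<in> grouplike D" and h: "h \<in> grouplike D" and ne: "g \<noteq> h"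
  shows "prim D g h \<subseteq> line (\<lambda>i. g i - h i)"
proof
  fix x assume x: "x \<in> prim D g h"
  obtain i j where det: "g i * h j - g j * h i \<noteq> 0" using minor_exists[OF g h ne] by blast
  have E: "\<And>a b. g a * x b + x a * h b = g b * x a + x b * h a"
  proof -
    fix a b
    have "lin D x (a,b) = lin D x (b,a)" by (rule lin_cocomm[OF cc])
    then show "g a * x b + x a * h b = g b * x a + x b * h a"
      using x by (simp add: prim_def tens_def)
  qed
  define c where "c = (x i * h j - x j * h i) / (g i * h j - g j * h i)"
  have "x = (\<lambda>b. c * (g b - h b))"
  proof
    fix b
    have e1: "g i * x b + x i * h b = g b * x i + x b * h i" by (rule E)
    have e2: "g j * x b + x j * h b = g b * x j + x b * h j" by (rule E)
    have "h j * (g i * x b + x i * h b) - h i * (g j * x b + x j * h b)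
        = h j * (g b * x i + x b * h i) - h i * (g b * x j + x b * h j)" using e1 e2 by simp
    then have "x b * (g i * h j - g j * h i) = (x i * h j - x j * h i) * (g b - h b)"
      by (simp add: algebra_simps)
    then show "x b = c * (g b - h b)" using det by (simp add: c_def field_simps)
  qed
  then show "x \<in> line (\<lambda>i. g i - h i)" by (auto simp: line_def)
qed

lemma arrow_eq:
  fixes D :: "'b \<Rightarrow> 'b \<times> 'b \<Rightarrow> 'k::field"
  assumes cc: "cocommutative D" and g: "g \<in> grouplike D" and h: "h \<in> grouplike D"
    and a: "arrow D h g"
  shows "g = h"
  using prim_line[OF cc g h] a by (auto simp: arrow_def)


theorem mainTheorem7:
  fixes D :: "'b \<Rightarrow> 'b \<times> 'b \<Rightarrow> 'k::field"
    and eps :: "'b \<Rightarrow> 'k" and M :: "'b \<Rightarrow> 'b \<Rightarrow> 'b \<Rightarrow> 'k" and u :: "'b \<Rightarrow> 'k"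
    and Phi :: "'b \<Rightarrow> 'b \<Rightarrow> 'b \<Rightarrow> 'k" and S :: "'b \<Rightarrow> 'b \<Rightarrow> 'k"
    and alpha beta :: "'b \<Rightarrow> 'k"
  assumes "majid D eps M u Phi S alpha beta"
    and "cocommutative D"
    and "pointed D"
    and "quiver_connected D"
  shows "card (grouplike D) = 1 \<and> coradical D = line u"
proof -
  note mj = assms(1)[unfolded majid_def]
  have co: "coalgebra D eps" using mj by blast
  have uf: "u \<in> fvec" using mj by blast
  have lu: "lin D u = tens u u" using mj by blast
  have eu: "ev eps u = 1" using mj by blast
  have unz: "u \<noteq> zvec"
  proof
    assume "u = zvec"
    then have "ev eps u = 0" by (simp add: ev_def supp_def zvec_def)
    then show False using eu by simp
  qed
  have ug: "u \<in> grouplike D" using uf lu unz by (simp add: grouplike_def)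
  define R where "R = {(x, y). x \<in> grouplike D \<and> y \<in> grouplike D \<and> (arrow D x y \<or> arrow D y x)}"
  have Rid: "\<And>x y. (x,y) \<in> R \<Longrightarrow> x = y"
    using arrow_eq[OF assms(2)] unfolding R_def by blast
  have onlyu: "\<And>g. g \<in> grouplike D \<Longrightarrow> g = u"
  proof -
    fix g assume g: "g \<in> grouplike D"
    have "(g,u) \<in> R\<^sup>*" using assms(4) g ug unfolding quiver_connected_def R_def by blast
    then show "g = u" by (induct rule: rtrancl_induct) (auto dest: Rid)
  qed
  have G: "grouplike D = {u}" using ug onlyu by blast
  have lsub: "line u \<subseteq> fvec"
  proof
    fix y assume "y \<in> line u"
    then obtain c where y: "y = (\<lambda>i. c * u i)" by (auto simp: line_def)
    have "supp y \<subseteq> supp u" by (auto simp: y supp_def)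
    then show "y \<in> fvec" using uf by (auto simp: fvec_def intro: finite_subset)
  qed
  have sp: "subspace (line u)"
    unfolding subspace_def
  proof (intro conjI ballI allI)
    show "line u \<subseteq> fvec" by (rule lsub)
    show "zvec \<in> line u" unfolding line_def zvec_def by (rule CollectI, rule exI[of _ 0]) simp
    fix x y assume "x \<in> line u" "y \<in> line u"
    then obtain a b where "x = (\<lambda>i. a * u i)" "y = (\<lambda>i. b * u i)" by (auto simp: line_def)
    then show "(\<lambda>i. x i + y i) \<in> line u"
      unfolding line_def by (intro CollectI exI[of _ "a + b"]) (simp add: algebra_simps)
  next
    fix c x assume "x \<in> line u"
    then obtain a where "x = (\<lambda>i. a * u i)" by (auto simp: line_def)
    then show "(\<lambda>i. c * x i) \<in> line u"
      unfolding line_def by (intro CollectI exI[of _ "c * a"]) (simp add: algebra_simps)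
  qed
  have sc: "subcoalg D (line u)"
    unfolding subcoalg_def
  proof (intro conjI ballI sp)
    fix x assume "x \<in> line u"
    then obtain a where x: "x = (\<lambda>i. a * u i)" by (auto simp: line_def)
    have "lin D x = (\<lambda>p. a * tens u u p)" using x lin_scale lu by metis
    also have "\<dots> = (\<lambda>p. \<Sum>i<(1::nat). tens ((\<lambda>_. x) i) ((\<lambda>_. u) i) p)"
      by (auto simp: tens_def x)
    finally have eq: "lin D x = (\<lambda>p. \<Sum>i<(1::nat). tens ((\<lambda>_. x) i) ((\<lambda>_. u) i) p)" .
    have ul: "u \<in> line u" unfolding line_def by (intro CollectI exI[of _ 1]) simp
    have "\<forall>i<(1::nat). (\<lambda>_. x) i \<in> line u \<and> (\<lambda>_. u) i \<in> line u" using ul \<open>x \<in> line u\<close> by blast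
    then show "lin D x \<in> tspan (line u)" unfolding tspan_def
      by (intro CollectI exI[of _ "1::nat"] exI[of _ "\<lambda>_. x"] exI[of _ "\<lambda>_. u"] conjI eq)
  qed
  have simp_u: "simple_subcoalg D (line u)"
    unfolding simple_subcoalg_def
  proof (intro conjI allI impI sc)
    have "u \<in> line u" unfolding line_def by (intro CollectI exI[of _ 1]) simp
    then show "line u \<noteq> {zvec}" using unz by blast
  next
    fix W' assume W': "subcoalg D W' \<and> W' \<subseteq> line u"
    show "W' = {zvec} \<or> W' = line u"
    proof (cases "W' = {zvec}")
      case False
      have z: "zvec \<in> W'" using W' by (simp add: subcoalg_def subspace_def)
      then obtain y where yW: "y \<in> W'" and ynz: "y \<noteq> zvec" using False by blast
      then obtain d where y: "y = (\<lambda>i. d * u i)" using W' by (auto simp: line_def)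
      have d0: "d \<noteq> 0" using ynz y by (auto simp: zvec_def fun_eq_iff)
      have "line u \<subseteq> W'"
      proof
        fix v assume "v \<in> line u"
        then obtain c where v: "v = (\<lambda>i. c * u i)" by (auto simp: line_def)
        have "\<forall>c. \<forall>x\<in>W'. (\<lambda>i. c * x i) \<in> W'" using W' by (simp add: subcoalg_def subspace_def)
        then have "(\<lambda>i. (c / d) * y i) \<in> W'" using yW by blast
        moreover have "(\<lambda>i. (c / d) * y i) = v" using d0 by (simp add: y v fun_eq_iff)
        ultimately show "v \<in> W'" by simp
      qed
      then show ?thesis using W' by blast
    qed simp
  qed
  have allsimp: "\<And>W. simple_subcoalg D W \<Longrightarrow> W = line u"
  proof -
    fix W assume sW: "simple_subcoalg D W"
    obtain x where xnz: "x \<noteq> zvec" and Wx: "W = line x"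
      using assms(3) sW unfolding pointed_def by blast
    have xW: "x \<in> W" unfolding Wx line_def by (intro CollectI exI[of _ 1]) simp
    have xf: "x \<in> fvec" using sW xW by (auto simp: simple_subcoalg_def subcoalg_def subspace_def)
    have "lin D x \<in> tspan (line x)" using sW xW Wx by (auto simp: simple_subcoalg_def subcoalg_def)
    then obtain n :: nat and xs ys :: "nat \<Rightarrow> 'b \<Rightarrow> 'k" where xy: "\<forall>i<n. xs i \<in> line x \<and> ys i \<in> line x"
      and ld: "lin D x = (\<lambda>p. \<Sum>i<n. tens (xs i) (ys i) p)" unfolding tspan_def by blast
    have "\<forall>i<n. \<exists>c d. xs i = (\<lambda>j. c * x j) \<and> ys i = (\<lambda>j. d * x j)" using xy by (auto simp: line_def)
    then obtain cs ds where cd: "\<forall>i<n. xs i = (\<lambda>j. cs i * x j) \<and> ys i = (\<lambda>j. ds i * x j)"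
      by metis
    define C where "C = (\<Sum>i<n. cs i * ds i)"
    have ldC: "lin D x = (\<lambda>p. C * tens x x p)"
    proof
      fix p :: "'b \<times> 'b"
      obtain a b where p: "p = (a,b)" by (cases p)
      have "lin D x p = (\<Sum>i<n. tens (xs i) (ys i) p)" using ld by simp
      also have "\<dots> = (\<Sum>i<n. cs i * ds i * (x a * x b))"
        by (rule sum.cong) (auto simp: cd p tens_def algebra_simps)
      also have "\<dots> = C * tens x x p" by (simp add: C_def p tens_def sum_distrib_right)
      finally show "lin D x p = C * tens x x p" .
    qed
    have C0: "C \<noteq> 0"
    proof
      assume "C = 0"
      then have "lin D x = (\<lambda>p. 0)" using ldC by simp
      then show False using counit_zero[OF co xf] xnz by simp
    qed
    define g where "g = (\<lambda>i. C * x i)"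
    have gf: "g \<in> fvec"
    proof -
      have "supp g = supp x" using C0 by (auto simp: g_def supp_def)
      then show ?thesis using xf by (simp add: fvec_def)
    qed
    have gnz: "g \<noteq> zvec" using xnz C0 by (auto simp: g_def zvec_def fun_eq_iff)
    have "lin D g = (\<lambda>p. C * lin D x p)" unfolding g_def by (rule lin_scale)
    also have "\<dots> = tens g g" using ldC by (auto simp: tens_def g_def fun_eq_iff)
    finally have "g \<in> grouplike D" using gf gnz by (simp add: grouplike_def)
    then have gu: "g = u" using onlyu by blast
    have "line x = line u"
    proof
      show "line x \<subseteq> line u"
      proof
        fix v assume "v \<in> line x"
        then obtain c where v: "v = (\<lambda>i. c * x i)" by (auto simp: line_def)
        have "v = (\<lambda>i. (c / C) * u i)" using C0 by (simp add: v gu[symmetric] g_def fun_eq_iff)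
        then show "v \<in> line u" unfolding line_def by blast
      qed
      show "line u \<subseteq> line x"
      proof
        fix v assume "v \<in> line u"
        then obtain c where v: "v = (\<lambda>i. c * u i)" by (auto simp: line_def)
        have "v = (\<lambda>i. (c * C) * x i)" by (simp add: v gu[symmetric] g_def fun_eq_iff)
        then show "v \<in> line x" unfolding line_def by blast
      qed
    qed
    then show "W = line u" using Wx by simp
  qed
  have U: "\<Union>{W. simple_subcoalg D W} = line u" using simp_u allsimp by blast
  have "span (line u) = line u"
  proof
    show "span (line u) \<subseteq> line u"
    proof
      fix z assume "z \<in> span (line u)"
      then obtain n :: nat and cs :: "nat \<Rightarrow> 'k" and xs :: "nat \<Rightarrow> 'b \<Rightarrow> 'k" where xs: "\<forall>i<n. xs i \<in> line u"
        and z: "z = (\<lambda>t. \<Sum>i<n. cs i * xs i t)" unfolding span_def by blast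
      have "\<forall>i<n. \<exists>d. xs i = (\<lambda>j. d * u j)" using xs by (auto simp: line_def)
      then obtain ds where ds: "\<forall>i<n. xs i = (\<lambda>j. ds i * u j)" by metis
      have "z = (\<lambda>t. (\<Sum>i<n. cs i * ds i) * u t)"
        unfolding z sum_distrib_right by (intro ext sum.cong) (auto simp: ds)
      then show "z \<in> line u" by (auto simp: line_def)
    qed
    show "line u \<subseteq> span (line u)"
    proof
      fix z assume zl: "z \<in> line u"
      have "z = (\<lambda>t. \<Sum>i<(1::nat). (\<lambda>_. 1) i * (\<lambda>_. z) i t)" by simp
      then show "z \<in> span (line u)" unfolding span_def using zl
        by (intro CollectI exI[of _ "1::nat"] exI[of _ "\<lambda>_. 1"] exI[of _ "\<lambda>_. z"] conjI) auto
    qed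
  qed
  then have "coradical D = line u" unfolding coradical_def U .
  then show ?thesis using G by simp
qed

end
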